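(* Consider the model below and let $\delta:=(M-1)(1-M_f\beta)+\lambda\sigma N$. Then the following holds if and only if $\delta<0$: for every $p,q\in(0,1]$, every $\epsilon_1\in\mathbb{R}$ and every $\epsilon_2\ge0$, there exists exactly one bounded-rationality equilibrium (BRE). Moreover, if $\delta<0$, then for fixed $p,q$, $\epsilon_2\ge0$ and other parameters there exist $\epsilon^{PP,BR}\in\mathbb{R}$ and $\epsilon^{ZP,BR}\in[-\infty,\infty)$ with $\epsilon^{PP,BR}>\epsilon^{ZP,BR}$ such that: (i) the unique BRE is of type PP if and only if $\epsilon_1>\epsilon^{PP,BR}$; (ii) the unique BRE is of type ZP if and only if $\epsilon^{PP,BR}\ge\epsilon_1>\epsilon^{ZP,BR}$; (iii) the unique BRE is of type ZZ if and only if $\epsilon_1\le\epsilon^{ZP,BR}$.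
   Context: Parameters: $0<\beta<1$, $\sigma,\lambda,\mu>0$, $\psi>1$, $M,M_f,N\in(0,1]$. The shock $\epsilon_t$ is a two-state Markov chain on $\{\epsilon_1,\epsilon_2\}$ with $\Pr(\epsilon_{t+1}=\epsilon_1\mid\epsilon_t=\epsilon_1)=p$, $\Pr(\epsilon_{t+1}=\epsilon_2\mid\epsilon_t=\epsilon_2)=q$. Model: $x_t=M E_t x_{t+1}-\sigma(i_t-N E_t\pi_{t+1})+\epsilon_t$, $\pi_t=\lambda x_t+M_f\beta E_t\pi_{t+1}$, $i_t=\max\{\psi\pi_t,-\mu\}$. A BRE is a pair $Y_j=(x_j,\pi_j)$, $j=1,2$, such that for $j=1,2$, with $i_j=\max\{\psi\pi_j,-\mu\}$: $x_j=Mx^e_j-\sigma(i_j-N\pi^e_j)+\epsilon_j$, $\pi_j=\lambda x_j+M_f\beta\pi^e_j$, where $(x^e_1,\pi^e_1)=pY_1+(1-p)Y_2$, $(x^e_2,\pi^e_2)=(1-q)Y_1+qY_2$. Types: the ZLB binds in state $j$ if $\psi\pi_j\le-\mu$. The equilibrium is of type PP if it binds in neither state, ZP if it binds in state 1 only, PZ if it binds in state 2 only, ZZ if it binds in both. *)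

theory Defs
  imports Complex_Main "HOL-Library.Extended_Real"
begin

text \<open>Arguments: beta sigma lam mu psi M Mf N (structural parameters),
  p q (persistence probabilities), e1 e2 (shock values),
  x1 pi1 x2 pi2 (the candidate equilibrium Y_1 = (x1,pi1), Y_2 = (x2,pi2)).\<close>

definition bre ::
  "real \<Rightarrow> real \<Rightarrow> real \<Rightarrow> real \<Rightarrow> real \<Rightarrow> real \<Rightarrow> real \<Rightarrow> real \<Rightarrow>
   real \<Rightarrow> real \<Rightarrow> real \<Rightarrow> real \<Rightarrow> real \<Rightarrow> real \<Rightarrow> real \<Rightarrow> real \<Rightarrow> bool" where
  "bre beta sigma lam mu psi M Mf N p q e1 e2 x1 pi1 x2 pi2 \<longleftrightarrow>
     (let xe1 = p * x1 + (1 - p) * x2;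
          pe1 = p * pi1 + (1 - p) * pi2;
          xe2 = (1 - q) * x1 + q * x2;
          pe2 = (1 - q) * pi1 + q * pi2;
          i1 = max (psi * pi1) (- mu);
          i2 = max (psi * pi2) (- mu)
      in x1 = M * xe1 - sigma * (i1 - N * pe1) + e1
       \<and> pi1 = lam * x1 + Mf * beta * pe1
       \<and> x2 = M * xe2 - sigma * (i2 - N * pe2) + e2
       \<and> pi2 = lam * x2 + Mf * beta * pe2)"

definition zlb_binds :: "real \<Rightarrow> real \<Rightarrow> real \<Rightarrow> bool" where
  "zlb_binds psi mu infl \<longleftrightarrow> psi * infl \<le> - mu"

definition type_PP :: "real \<Rightarrow> real \<Rightarrow> real \<Rightarrow> real \<Rightarrow> bool" where
  "type_PP psi mu pi1 pi2 \<longleftrightarrow> \<not> zlb_binds psi mu pi1 \<and> \<not> zlb_binds psi mu pi2"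

definition type_ZP :: "real \<Rightarrow> real \<Rightarrow> real \<Rightarrow> real \<Rightarrow> bool" where
  "type_ZP psi mu pi1 pi2 \<longleftrightarrow> zlb_binds psi mu pi1 \<and> \<not> zlb_binds psi mu pi2"

definition type_PZ :: "real \<Rightarrow> real \<Rightarrow> real \<Rightarrow> real \<Rightarrow> bool" where
  "type_PZ psi mu pi1 pi2 \<longleftrightarrow> \<not> zlb_binds psi mu pi1 \<and> zlb_binds psi mu pi2"

definition type_ZZ :: "real \<Rightarrow> real \<Rightarrow> real \<Rightarrow> real \<Rightarrow> bool" where
  "type_ZZ psi mu pi1 pi2 \<longleftrightarrow> zlb_binds psi mu pi1 \<and> zlb_binds psi mu pi2"

definition unique_bre ::
  "real \<Rightarrow> real \<Rightarrow> real \<Rightarrow> real \<Rightarrow> real \<Rightarrow> real \<Rightarrow> real \<Rightarrow> real \<Rightarrow>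
   real \<Rightarrow> real \<Rightarrow> real \<Rightarrow> real \<Rightarrow> bool" where
  "unique_bre beta sigma lam mu psi M Mf N p q e1 e2 \<longleftrightarrow>
     (\<exists>!Y :: real \<times> real \<times> real \<times> real.
        bre beta sigma lam mu psi M Mf N p q e1 e2
            (fst Y) (fst (snd Y)) (fst (snd (snd Y))) (snd (snd (snd Y))))"

end

theory Submission imports Defs begin

definition sys :: "real \<Rightarrow> real \<Rightarrow> real \<Rightarrow> real \<Rightarrow> real \<Rightarrow> real \<Rightarrow> real \<Rightarrow> real \<Rightarrow> real \<Rightarrow> real \<Rightarrow> bool" where
  "sys D A B S psi mu E1 E2 u v \<longleftrightarrow>
     (D + A) * u - A * v + S * max (psi * u) (- mu) = E1 \<and>
     - B * u + (D + B) * v + S * max (psi * v) (- mu) = E2"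

definition "gco beta sigma lam M Mf N p q = M*(Mf*beta)*(p+q) - (M + Mf*beta + lam*sigma*N)"
definition "Dco beta sigma lam M Mf N = (1-M)*(1-Mf*beta) - lam*sigma*N"

lemma row_identity:
  fixes l a M s N p q x1 x2 pi1 pi2 ii ee :: real
  assumes l: "l > 0"
    and h1: "l*x1 = pi1 - a*(p*pi1+(1-p)*pi2)"
    and h2: "l*x2 = pi2 - a*((1-q)*pi1+q*pi2)"
  shows "l*x1 - l*(M*(p*x1+(1-p)*x2) - s*(ii - N*(p*pi1+(1-p)*pi2)) + ee)
     = (((1-M)*(1-a) - l*s*N) + (-(1-p)*(M*a*(p+q) - (M + a + l*s*N))))*pi1
       - (-(1-p)*(M*a*(p+q) - (M + a + l*s*N)))*pi2 + (l*s)*ii - l*ee"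
proof -
  have "l*(M*(p*x1+(1-p)*x2) - s*(ii - N*(p*pi1+(1-p)*pi2)) + ee)
     = M*(p*(l*x1)+(1-p)*(l*x2)) - l*s*(ii - N*(p*pi1+(1-p)*pi2)) + l*ee"
    by (simp add: algebra_simps)
  also have "\<dots> = M*(p*(pi1 - a*(p*pi1+(1-p)*pi2))+(1-p)*(pi2 - a*((1-q)*pi1+q*pi2))) - l*s*(ii - N*(p*pi1+(1-p)*pi2)) + l*ee"
    by (simp add: h1 h2)
  finally show ?thesis unfolding h1 by (simp add: algebra_simps)
qed

lemma row_identity2:
  fixes l a M s N p q x1 x2 pi1 pi2 ii ee :: real
  assumes l: "l > 0"
    and h1: "l*x1 = pi1 - a*(p*pi1+(1-p)*pi2)"
    and h2: "l*x2 = pi2 - a*((1-q)*pi1+q*pi2)"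
  shows "l*x2 - l*(M*((1-q)*x1+q*x2) - s*(ii - N*((1-q)*pi1+q*pi2)) + ee)
     = - (-(1-q)*(M*a*(p+q) - (M + a + l*s*N)))*pi1 +
       (((1-M)*(1-a) - l*s*N) + (-(1-q)*(M*a*(p+q) - (M + a + l*s*N))))*pi2
        + (l*s)*ii - l*ee"
proof -
  have "l*(M*((1-q)*x1+q*x2) - s*(ii - N*((1-q)*pi1+q*pi2)) + ee)
     = M*((1-q)*(l*x1)+q*(l*x2)) - l*s*(ii - N*((1-q)*pi1+q*pi2)) + l*ee"
    by (simp add: algebra_simps)
  also have "\<dots> = M*((1-q)*(pi1 - a*(p*pi1+(1-p)*pi2))+q*(pi2 - a*((1-q)*pi1+q*pi2))) - l*s*(ii - N*((1-q)*pi1+q*pi2)) + l*ee"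
    by (simp add: h1 h2)
  finally show ?thesis unfolding h2 by (simp add: algebra_simps)
qed

lemma bre_reduce:
  assumes l: "lam > 0"
  shows "bre beta sigma lam mu psi M Mf N p q e1 e2 x1 pi1 x2 pi2 \<longleftrightarrow>
    lam*x1 = pi1 - (Mf*beta)*(p*pi1+(1-p)*pi2) \<and> lam*x2 = pi2 - (Mf*beta)*((1-q)*pi1+q*pi2) \<and>
    sys (Dco beta sigma lam M Mf N) (-(1-p)*gco beta sigma lam M Mf N p q)
        (-(1-q)*gco beta sigma lam M Mf N p q) (lam*sigma) psi mu (lam*e1) (lam*e2) pi1 pi2"
proof -
  let ?a = "Mf*beta"
  have e1: "pi1 = lam * x1 + Mf * beta * (p * pi1 + (1 - p) * pi2) \<longleftrightarrow> lam*x1 = pi1 - ?a*(p*pi1+(1-p)*pi2)"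
    by (simp add: algebra_simps) linarith
  have e2: "pi2 = lam * x2 + Mf * beta * ((1-q) * pi1 + q * pi2) \<longleftrightarrow> lam*x2 = pi2 - ?a*((1-q)*pi1+q*pi2)"
    by (simp add: algebra_simps) linarith
  show ?thesis
  proof
    assume b: "bre beta sigma lam mu psi M Mf N p q e1 e2 x1 pi1 x2 pi2"
    then have h1: "lam*x1 = pi1 - ?a*(p*pi1+(1-p)*pi2)" and h2: "lam*x2 = pi2 - ?a*((1-q)*pi1+q*pi2)"
      unfolding bre_def Let_def using e1 e2 by auto
    from b have x1: "x1 = M * (p * x1 + (1 - p) * x2) - sigma * (max (psi * pi1) (- mu) - N * (p * pi1 + (1 - p) * pi2)) + e1"
      and x2: "x2 = M * ((1-q) * x1 + q * x2) - sigma * (max (psi * pi2) (- mu) - N * ((1-q) * pi1 + q * pi2)) + e2"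
      unfolding bre_def Let_def by auto
    note r1 = row_identity[OF l h1 h2, where M=M and s=sigma and N=N and ii="max (psi * pi1) (- mu)" and ee=e1]
    note r2 = row_identity2[OF l h1 h2, where M=M and s=sigma and N=N and ii="max (psi * pi2) (- mu)" and ee=e2]
    show "lam*x1 = pi1 - ?a*(p*pi1+(1-p)*pi2) \<and> lam*x2 = pi2 - ?a*((1-q)*pi1+q*pi2) \<and>
    sys (Dco beta sigma lam M Mf N) (-(1-p)*gco beta sigma lam M Mf N p q)
        (-(1-q)*gco beta sigma lam M Mf N p q) (lam*sigma) psi mu (lam*e1) (lam*e2) pi1 pi2"
    proof -
      have z1: "lam*x1 - lam*(M * (p * x1 + (1 - p) * x2) - sigma * (max (psi * pi1) (- mu) - N * (p * pi1 + (1 - p) * pi2)) + e1) = 0"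
        using x1 by simp
      have z2: "lam*x2 - lam*(M * ((1-q) * x1 + q * x2) - sigma * (max (psi * pi2) (- mu) - N * ((1-q) * pi1 + q * pi2)) + e2) = 0"
        using x2 by simp
      show ?thesis using h1 h2 r1 r2 z1 z2 unfolding sys_def Dco_def gco_def
        by linarith
    qed
  next
    assume h: "lam*x1 = pi1 - ?a*(p*pi1+(1-p)*pi2) \<and> lam*x2 = pi2 - ?a*((1-q)*pi1+q*pi2) \<and>
    sys (Dco beta sigma lam M Mf N) (-(1-p)*gco beta sigma lam M Mf N p q)
        (-(1-q)*gco beta sigma lam M Mf N p q) (lam*sigma) psi mu (lam*e1) (lam*e2) pi1 pi2"
    then have h1: "lam*x1 = pi1 - ?a*(p*pi1+(1-p)*pi2)" and h2: "lam*x2 = pi2 - ?a*((1-q)*pi1+q*pi2)" by auto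
    note r1 = row_identity[OF l h1 h2, where M=M and s=sigma and N=N and ii="max (psi * pi1) (- mu)" and ee=e1]
    note r2 = row_identity2[OF l h1 h2, where M=M and s=sigma and N=N and ii="max (psi * pi2) (- mu)" and ee=e2]
    have z1: "lam*x1 - lam*(M * (p * x1 + (1 - p) * x2) - sigma * (max (psi * pi1) (- mu) - N * (p * pi1 + (1 - p) * pi2)) + e1) = 0"
      using r1 h unfolding sys_def Dco_def gco_def by linarith
    have z2: "lam*x2 - lam*(M * ((1-q) * x1 + q * x2) - sigma * (max (psi * pi2) (- mu) - N * ((1-q) * pi1 + q * pi2)) + e2) = 0"
      using r2 h unfolding sys_def Dco_def gco_def by linarith
    have "x1 = M * (p * x1 + (1 - p) * x2) - sigma * (max (psi * pi1) (- mu) - N * (p * pi1 + (1 - p) * pi2)) + e1"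
      using z1 l by (simp add: right_diff_distrib[symmetric])
    moreover have "x2 = M * ((1-q) * x1 + q * x2) - sigma * (max (psi * pi2) (- mu) - N * ((1-q) * pi1 + q * pi2)) + e2"
      using z2 l by (simp add: right_diff_distrib[symmetric])
    ultimately show "bre beta sigma lam mu psi M Mf N p q e1 e2 x1 pi1 x2 pi2"
      unfolding bre_def Let_def using e1 e2 h1 h2 by auto
  qed
qed

lemma max_mono_psi:
  fixes psi mu u u' :: real
  assumes "psi > 0" "u' \<le> u"
  shows "max (psi * u') (- mu) \<le> max (psi * u) (- mu)"
proof -
  have "psi * u' \<le> psi * u" using assms by (simp add: mult_left_mono)
  then show ?thesis by linarith
qed

lemma sys_le:
  fixes D A B S psi mu E1 E2 u v u' v' :: real
  assumes D: "D > 0" and A: "A \<ge> 0" and B: "B \<ge> 0" and S: "S > 0" and psi: "psi > 0"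
    and s1: "sys D A B S psi mu E1 E2 u v" and s2: "sys D A B S psi mu E1 E2 u' v'"
  shows "u \<le> u' \<and> v \<le> v'"
proof (rule ccontr)
  assume nc: "\<not> (u \<le> u' \<and> v \<le> v')"
  from s1 s2 have q1: "(D + A) * u - A * v + S * max (psi * u) (- mu) = (D + A) * u' - A * v' + S * max (psi * u') (- mu)"
    and q2: "- B * u + (D + B) * v + S * max (psi * v) (- mu) = - B * u' + (D + B) * v' + S * max (psi * v') (- mu)"
    unfolding sys_def by auto
  show False
  proof (cases "u - u' \<ge> v - v'")
    case True
    then have pos: "u - u' > 0" using nc by auto
    have t1: "A * ((u - u') - (v - v')) \<ge> 0" using A True by simp
    have t2: "D * (u - u') > 0" using D pos by simp
    have t3: "S * (max (psi * u) (- mu) - max (psi * u') (- mu)) \<ge> 0"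
      using S max_mono_psi[OF psi, of u' u mu] pos by simp
    have "(D + A) * u - A * v + S * max (psi * u) (- mu) - ((D + A) * u' - A * v' + S * max (psi * u') (- mu))
       = D * (u - u') + A * ((u - u') - (v - v')) + S * (max (psi * u) (- mu) - max (psi * u') (- mu))"
      by (simp add: algebra_simps)
    then show False using q1 t1 t2 t3 by linarith
  next
    case False
    then have pos: "v - v' > 0" using nc by auto
    have t1: "B * ((v - v') - (u - u')) \<ge> 0" using B False by simp
    have t2: "D * (v - v') > 0" using D pos by simp
    have t3: "S * (max (psi * v) (- mu) - max (psi * v') (- mu)) \<ge> 0"
      using S max_mono_psi[OF psi, of v' v mu] pos by simp
    have "- B * u + (D + B) * v + S * max (psi * v) (- mu) - (- B * u' + (D + B) * v' + S * max (psi * v') (- mu))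
       = D * (v - v') + B * ((v - v') - (u - u')) + S * (max (psi * v) (- mu) - max (psi * v') (- mu))"
      by (simp add: algebra_simps)
    then show False using q2 t1 t2 t3 by linarith
  qed
qed

lemma sys_unique:
  fixes D A B S psi mu E1 E2 u v u' v' :: real
  assumes "D > 0" "A \<ge> 0" "B \<ge> 0" "S > 0" "psi > 0"
    and "sys D A B S psi mu E1 E2 u v" and "sys D A B S psi mu E1 E2 u' v'"
  shows "u = u' \<and> v = v'"
  using sys_le[OF assms(1-5) assms(6,7)] sys_le[OF assms(1-5) assms(7,6)] by auto

lemma sys_noPZ:
  fixes D A B S psi mu E1 E2 u v :: real
  assumes D: "D > 0" and A: "A \<ge> 0" and B: "B \<ge> 0" and S: "S > 0" and psi: "psi > 0" and mu: "mu > 0"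
    and E2: "E2 \<ge> 0" and s: "sys D A B S psi mu E1 E2 u v"
    and hu: "psi * u > - mu" and hv: "psi * v \<le> - mu"
  shows False
proof -
  have mv: "max (psi * v) (- mu) = - mu" using hv by simp
  have "psi * v < psi * u" using hu hv by linarith
  then have vu: "v < u" using psi by simp
  have "psi * v < 0" using hv mu by linarith
  then have vneg: "v < 0" using psi by (simp add: mult_less_0_iff)
  have "- B * u + (D + B) * v = B * (v - u) + D * v" by (simp add: algebra_simps)
  moreover have "B * (v - u) \<le> 0" using B vu by (simp add: mult_nonneg_nonpos)
  moreover have "D * v < 0" using D vneg by (simp add: mult_pos_neg)
  moreover have "S * mu > 0" using S mu by simp
  ultimately show False using s E2 mv unfolding sys_def by linarith
qed

lemma cramer:
  fixes a b c d r s det :: real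
  assumes "det = a*d - b*c" "det \<noteq> 0"
  shows "a*((d*r - b*s)/det) + b*((a*s - c*r)/det) = r"
    and "c*((d*r - b*s)/det) + d*((a*s - c*r)/det) = s"
proof -
  have "a*((d*r - b*s)/det) + b*((a*s - c*r)/det) = (a*(d*r - b*s) + b*(a*s - c*r))/det"
    by (simp add: add_divide_distrib)
  also have "a*(d*r - b*s) + b*(a*s - c*r) = det * r" unfolding assms(1) by (simp add: algebra_simps)
  finally show "a*((d*r - b*s)/det) + b*((a*s - c*r)/det) = r" using assms(2) by simp
  have "c*((d*r - b*s)/det) + d*((a*s - c*r)/det) = (c*(d*r - b*s) + d*(a*s - c*r))/det"
    by (simp add: add_divide_distrib)
  also have "c*(d*r - b*s) + d*(a*s - c*r) = det * s" unfolding assms(1) by (simp add: algebra_simps)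
  finally show "c*((d*r - b*s)/det) + d*((a*s - c*r)/det) = s" using assms(2) by simp
qed

lemma sys_cands:
  fixes D A B S psi mu E2 :: real
  assumes D: "D > 0" and A: "A \<ge> 0" and B: "B \<ge> 0" and S: "S > 0" and psi: "psi > 0"
    and mu: "mu > 0" and E2: "E2 \<ge> 0"
  defines "k \<equiv> - mu / psi"
  defines "a1 \<equiv> D + A + S*psi" and "b1 \<equiv> D + B + S*psi"
  defines "dPP \<equiv> a1*b1 - A*B" and "dZP \<equiv> (D+A)*b1 - A*B" and "dZZ \<equiv> (D+A)*(D+B) - A*B"
  defines "T1 \<equiv> (k*dPP - A*E2)/b1" and "T2 \<equiv> (k*dZP - (D+A)*E2)/B - S*mu"
  shows "\<And>E1. T1 < E1 \<Longrightarrow> \<exists>u v. sys D A B S psi mu E1 E2 u v \<and> psi*u > -mu \<and> psi*v > -mu"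
    and "\<And>E1. E1 \<le> T1 \<Longrightarrow> (B = 0 \<or> T2 < E1) \<Longrightarrow> \<exists>u v. sys D A B S psi mu E1 E2 u v \<and> psi*u \<le> -mu \<and> psi*v > -mu"
    and "\<And>E1. B > 0 \<Longrightarrow> E1 \<le> T2 \<Longrightarrow> \<exists>u v. sys D A B S psi mu E1 E2 u v \<and> psi*u \<le> -mu \<and> psi*v \<le> -mu"
    and "B > 0 \<Longrightarrow> T2 < T1"
proof -
  have pk: "psi * k = - mu" using psi unfolding k_def by simp
  have kneg: "k < 0" using psi mu unfolding k_def by simp
  have gtk: "\<And>x. psi*x > -mu \<longleftrightarrow> x > k" using psi pk
    by (metis mult_less_cancel_left_pos)
  have lek: "\<And>x. psi*x \<le> -mu \<longleftrightarrow> x \<le> k" using gtk by (meson not_less)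
  have SP: "S*psi > 0" using S psi by simp
  have a1p: "a1 > A" and b1p: "b1 > B" using D SP unfolding a1_def b1_def by auto
  have AB: "A*B \<ge> 0" using A B by simp
  have "A*B \<le> A*b1" using A b1p by (simp add: mult_left_mono)
  also have "A*b1 < a1*b1" using a1p b1p B by (simp add: mult_strict_right_mono)
  finally have dPPp: "dPP > 0" unfolding dPP_def by simp
  have "A*B \<le> A*b1" using A b1p by (simp add: mult_left_mono)
  also have "A*b1 < (D+A)*b1" using D b1p B by (simp add: mult_strict_right_mono)
  finally have dZPp: "dZP > 0" unfolding dZP_def by simp
  have "A*B \<le> A*(D+B)" using A D by (simp add: mult_left_mono)
  also have "A*(D+B) < (D+A)*(D+B)" using D B by (simp add: mult_strict_right_mono)
  finally have dZZp: "dZZ > 0" unfolding dZZ_def by simp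
  have b1pos: "b1 > 0" using b1p B by simp
  have dPPZP: "k*dPP = k*dZP - mu*S*b1"
    unfolding dPP_def dZP_def a1_def using pk by (simp add: algebra_simps)
  have dZPZZ: "k*dZP = k*dZZ - mu*S*(D+A)"
    unfolding dZZ_def dZP_def b1_def using pk by (simp add: algebra_simps)
  define uZ where "uZ E1 = (b1*(E1+S*mu) + A*E2)/dZP" for E1
  define vZ where "vZ E1 = ((D+A)*E2 + B*(E1+S*mu))/dZP" for E1
  have cZ: "(D+A)*uZ E1 + (-A)*vZ E1 = E1 + S*mu \<and> (-B)*uZ E1 + b1*vZ E1 = E2" for E1
  proof -
    have "uZ E1 = (b1*(E1+S*mu) - (-A)*E2)/dZP" "vZ E1 = ((D+A)*E2 - (-B)*(E1+S*mu))/dZP"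
      unfolding uZ_def vZ_def by simp_all
    then show ?thesis using cramer[of dZP "D+A" b1 "-A" "-B" "E1+S*mu" E2] dZPp unfolding dZP_def by simp
  qed
  have lZ1: "(D+A)*uZ E1 - A*vZ E1 = E1 + S*mu" for E1 using cZ[of E1] by simp
  have lZ2: "-B*uZ E1 + b1*vZ E1 = E2" for E1 using cZ[of E1] by simp
  have uZk: "uZ E1 \<le> k \<longleftrightarrow> E1 \<le> T1" for E1
  proof -
    have "uZ E1 \<le> k \<longleftrightarrow> b1*(E1+S*mu) + A*E2 \<le> k*dZP"
      unfolding uZ_def using dZPp by (simp add: divide_le_eq)
    also have "\<dots> \<longleftrightarrow> b1*E1 \<le> k*dPP - A*E2"
    proof -
      have "b1*(E1+S*mu) + A*E2 - k*dZP = b1*E1 - (k*dPP - A*E2)" using dPPZP by (simp add: algebra_simps)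
      then show ?thesis by linarith
    qed
    also have "\<dots> \<longleftrightarrow> E1 \<le> T1" unfolding T1_def using b1pos by (simp add: le_divide_eq mult.commute)
    finally show ?thesis .
  qed
  have uZT1: "uZ T1 = k"
  proof -
    have "b1*T1 = k*dPP - A*E2" unfolding T1_def using b1pos by simp
    then have "b1*(T1+S*mu) + A*E2 = k*dZP" using dPPZP by (simp add: algebra_simps)
    then show ?thesis unfolding uZ_def using dZPp by simp
  qed
  have vZk: "vZ E1 > k \<longleftrightarrow> T2 < E1" if Bp: "B > 0" for E1
  proof -
    have "vZ E1 > k \<longleftrightarrow> (D+A)*E2 + B*(E1+S*mu) > k*dZP"
      unfolding vZ_def using dZPp by (simp add: less_divide_eq)
    also have "\<dots> \<longleftrightarrow> B*(E1 + S*mu) > k*dZP - (D+A)*E2" by linarith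
    also have "\<dots> \<longleftrightarrow> E1 + S*mu > (k*dZP - (D+A)*E2)/B" using Bp by (simp add: divide_less_eq mult.commute)
    also have "\<dots> \<longleftrightarrow> T2 < E1" unfolding T2_def by linarith
    finally show ?thesis .
  qed
  have vZB0: "vZ E1 > k" if "B = 0" for E1
  proof -
    have "vZ E1 = (D+A)*E2/dZP" unfolding vZ_def using that by simp
    moreover have "(D+A)*E2/dZP \<ge> 0" using D A E2 dZPp by simp
    ultimately show ?thesis using kneg by linarith
  qed
  have sysZ: "sys D A B S psi mu E1 E2 (uZ E1) (vZ E1)" if "uZ E1 \<le> k" "vZ E1 > k" for E1
  proof -
    have m1: "max (psi * uZ E1) (- mu) = - mu" using that lek by simp
    have m2: "max (psi * vZ E1) (- mu) = psi * vZ E1" using that gtk by (simp add: less_imp_le)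
    show ?thesis unfolding sys_def m1 m2 using lZ1[of E1] lZ2[of E1] unfolding b1_def
      by (simp add: algebra_simps)
  qed
  show "\<exists>u v. sys D A B S psi mu E1 E2 u v \<and> psi*u \<le> -mu \<and> psi*v > -mu"
    if "E1 \<le> T1" "B = 0 \<or> T2 < E1" for E1
  proof -
    have a: "uZ E1 \<le> k" using uZk that by simp
    have b: "vZ E1 > k" using that vZk vZB0 B by force
    show ?thesis using sysZ[OF a b] a b lek gtk by blast
  qed
  define uP where "uP E1 = (b1*E1 + A*E2)/dPP" for E1
  define vP where "vP E1 = (a1*E2 + B*E1)/dPP" for E1
  have cP: "a1*uP E1 + (-A)*vP E1 = E1 \<and> (-B)*uP E1 + b1*vP E1 = E2" for E1
  proof -
    have "uP E1 = (b1*E1 - (-A)*E2)/dPP" "vP E1 = (a1*E2 - (-B)*E1)/dPP"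
      unfolding uP_def vP_def by simp_all
    then show ?thesis using cramer[of dPP a1 b1 "-A" "-B" E1 E2] dPPp unfolding dPP_def by simp
  qed
  have lP1: "a1*uP E1 - A*vP E1 = E1" for E1 using cP[of E1] by simp
  have lP2: "-B*uP E1 + b1*vP E1 = E2" for E1 using cP[of E1] by simp
  show "\<exists>u v. sys D A B S psi mu E1 E2 u v \<and> psi*u > -mu \<and> psi*v > -mu" if "T1 < E1" for E1
  proof -
    have "b1*T1 = k*dPP - A*E2" unfolding T1_def using b1pos by simp
    moreover have "b1*T1 < b1*E1" using that b1pos by simp
    ultimately have "b1*E1 + A*E2 > k*dPP" by linarith
    then have a: "uP E1 > k" unfolding uP_def using dPPp by (simp add: less_divide_eq)
    have b: "vP E1 > k"
    proof (rule ccontr)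
      assume "\<not> vP E1 > k"
      then have "b1 * vP E1 \<le> b1 * k" using b1pos by simp
      moreover have "B * uP E1 \<ge> B*k" using a B by (simp add: mult_left_mono)
      moreover have "(b1 - B) * k < 0" using b1p kneg by (simp add: mult_pos_neg)
      ultimately show False using lP2[of E1] E2 by (simp add: algebra_simps)
    qed
    have m1: "max (psi * uP E1) (- mu) = psi * uP E1" using a gtk by (simp add: less_imp_le)
    have m2: "max (psi * vP E1) (- mu) = psi * vP E1" using b gtk by (simp add: less_imp_le)
    have "sys D A B S psi mu E1 E2 (uP E1) (vP E1)" unfolding sys_def m1 m2
      using lP1[of E1] lP2[of E1] unfolding a1_def b1_def by (simp add: algebra_simps)
    then show ?thesis using a b gtk by blast
  qed
  define uW where "uW E1 = ((D+B)*(E1+S*mu) + A*(E2+S*mu))/dZZ" for E1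
  define vW where "vW E1 = ((D+A)*(E2+S*mu) + B*(E1+S*mu))/dZZ" for E1
  have cW: "(D+A)*uW E1 + (-A)*vW E1 = E1 + S*mu \<and> (-B)*uW E1 + (D+B)*vW E1 = E2 + S*mu" for E1
  proof -
    have "uW E1 = ((D+B)*(E1+S*mu) - (-A)*(E2+S*mu))/dZZ" "vW E1 = ((D+A)*(E2+S*mu) - (-B)*(E1+S*mu))/dZZ"
      unfolding uW_def vW_def by simp_all
    then show ?thesis using cramer[of dZZ "D+A" "D+B" "-A" "-B" "E1+S*mu" "E2+S*mu"] dZZp unfolding dZZ_def by simp
  qed
  have lW1: "(D+A)*uW E1 - A*vW E1 = E1 + S*mu" for E1 using cW[of E1] by simp
  have lW2: "-B*uW E1 + (D+B)*vW E1 = E2 + S*mu" for E1 using cW[of E1] by simp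
  show "\<exists>u v. sys D A B S psi mu E1 E2 u v \<and> psi*u \<le> -mu \<and> psi*v \<le> -mu" if Bp: "B > 0" "E1 \<le> T2" for E1
  proof -
    have "B*E1 \<le> B*T2" using that by (simp add: mult_left_mono)
    moreover have "B*T2 = k*dZP - (D+A)*E2 - B*(S*mu)" 
    proof -
      have h: "B*((k*dZP - (D+A)*E2)/B) = k*dZP - (D+A)*E2" using Bp by simp
      show ?thesis unfolding T2_def right_diff_distrib h ..
    qed
    ultimately have "(D+A)*(E2+S*mu) + B*(E1+S*mu) \<le> k*dZZ" using dZPZZ by (simp add: algebra_simps)
    then have b: "vW E1 \<le> k" unfolding vW_def using dZZp by (simp add: divide_le_eq)
    have a: "uW E1 \<le> k"
    proof (rule ccontr)
      assume "\<not> uW E1 \<le> k"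
      then have "B * uW E1 \<ge> B * k" using Bp by simp
      moreover have "(D+B) * vW E1 \<le> (D+B) * k" using b D B by (simp add: mult_left_mono)
      moreover have "D * k < 0" using D kneg by (simp add: mult_pos_neg)
      moreover have "S*mu > 0" using S mu by simp
      ultimately show False using lW2[of E1] E2 by (simp add: algebra_simps)
    qed
    have m1: "max (psi * uW E1) (- mu) = - mu" using a lek by simp
    have m2: "max (psi * vW E1) (- mu) = - mu" using b lek by simp
    have "sys D A B S psi mu E1 E2 (uW E1) (vW E1)" unfolding sys_def m1 m2
      using lW1[of E1] lW2[of E1] by (simp add: algebra_simps)
    then show ?thesis using a b lek by blast
  qed
  show "T2 < T1" if Bp: "B > 0"
  proof -
    have "vZ T1 > k"
    proof (rule ccontr)
      assume "\<not> vZ T1 > k"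
      then have "b1 * vZ T1 \<le> b1 * k" using b1pos by simp
      moreover have "(b1 - B) * k < 0" using b1p kneg by (simp add: mult_pos_neg)
      ultimately show False using lZ2[of T1] uZT1 E2 by (simp add: algebra_simps)
    qed
    then show ?thesis using vZk[OF Bp] by simp
  qed
qed


lemma sys_exists:
  fixes D A B S psi mu E1 E2 :: real
  assumes "D > 0" "A \<ge> 0" "B \<ge> 0" "S > 0" "psi > 0" "mu > 0" "E2 \<ge> 0"
  shows "\<exists>u v. sys D A B S psi mu E1 E2 u v"
proof -
  note c = sys_cands[OF assms]
  define T1 where "T1 = (- mu / psi * ((D + A + S*psi) * (D + B + S*psi) - A*B) - A*E2)/(D + B + S*psi)"
  define T2 where "T2 = (- mu / psi * ((D+A)*(D + B + S*psi) - A*B) - (D+A)*E2)/B - S*mu"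
  note c = c[folded T1_def T2_def]
  consider "T1 < E1" | "E1 \<le> T1" "B = 0 \<or> T2 < E1" | "B > 0" "E1 \<le> T2"
    using assms(3) by (cases "T1 < E1"; cases "B = 0"; cases "T2 < E1") auto
  then show ?thesis
  proof cases
    case 1 then show ?thesis using c(1) by blast
  next
    case 2 then show ?thesis using c(2) by blast
  next
    case 3 then show ?thesis using c(3) by blast
  qed
qed

lemma sys_thresh:
  fixes D A B S psi mu E2 l :: real
  assumes as: "D > 0" "A \<ge> 0" "B \<ge> 0" "S > 0" "psi > 0" "mu > 0" "E2 \<ge> 0" and l: "l > 0"
  shows "\<exists>t1 (t2::ereal). t2 \<noteq> \<infinity> \<and> t2 < ereal t1 \<and>
     (\<forall>e u v. sys D A B S psi mu (l*e) E2 u v \<longrightarrow>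
        ((psi*u > -mu \<and> psi*v > -mu) \<longleftrightarrow> t1 < e)
      \<and> ((psi*u \<le> -mu \<and> psi*v > -mu) \<longleftrightarrow> e \<le> t1 \<and> t2 < ereal e)
      \<and> ((psi*u \<le> -mu \<and> psi*v \<le> -mu) \<longleftrightarrow> ereal e \<le> t2))"
proof -
  note c = sys_cands[OF as]
  define T1 where "T1 = (- mu / psi * ((D + A + S*psi) * (D + B + S*psi) - A*B) - A*E2)/(D + B + S*psi)"
  define T2 where "T2 = (- mu / psi * ((D+A)*(D + B + S*psi) - A*B) - (D+A)*E2)/B - S*mu"
  note c = c[folded T1_def T2_def]
  define t2 where "t2 = (if B = 0 then -\<infinity> else ereal (T2/l))"
  have t2ne: "t2 \<noteq> \<infinity>" unfolding t2_def by simp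
  have t21: "t2 < ereal (T1/l)"
  proof (cases "B = 0")
    case True then show ?thesis unfolding t2_def by simp
  next
    case False
    then have "B > 0" using as by simp
    then have "T2 < T1" using c(4) by simp
    then have "T2/l < T1/l" using l by (simp add: divide_strict_right_mono)
    then show ?thesis unfolding t2_def using False by simp
  qed
  have key: "((psi*u > -mu \<and> psi*v > -mu) \<longleftrightarrow> T1/l < e)
      \<and> ((psi*u \<le> -mu \<and> psi*v > -mu) \<longleftrightarrow> e \<le> T1/l \<and> t2 < ereal e)
      \<and> ((psi*u \<le> -mu \<and> psi*v \<le> -mu) \<longleftrightarrow> ereal e \<le> t2)"
    if s: "sys D A B S psi mu (l*e) E2 u v" for e u v
  proof -
    have e1: "T1/l < e \<longleftrightarrow> T1 < l*e" using l by (simp add: pos_divide_less_eq mult.commute)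
    have e2: "ereal e \<le> t2 \<longleftrightarrow> B > 0 \<and> l*e \<le> T2"
    proof (cases "B = 0")
      case True then show ?thesis unfolding t2_def by simp
    next
      case False
      then have Bp: "B > 0" using as(3) by simp
      have "ereal e \<le> t2 \<longleftrightarrow> e \<le> T2/l" unfolding t2_def using False by simp
      also have "\<dots> \<longleftrightarrow> l*e \<le> T2" using l by (simp add: pos_le_divide_eq mult.commute)
      finally show ?thesis using Bp by simp
    qed
    have e3: "t2 < ereal e \<longleftrightarrow> B = 0 \<or> T2 < l*e"
    proof (cases "B = 0")
      case True then show ?thesis unfolding t2_def by simp
    next
      case False
      have "t2 < ereal e \<longleftrightarrow> T2/l < e" unfolding t2_def using False by simp
      also have "\<dots> \<longleftrightarrow> T2 < l*e" using l by (simp add: pos_divide_less_eq mult.commute)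
      finally show ?thesis using False by simp
    qed
    consider "T1 < l*e" | "l*e \<le> T1" "B = 0 \<or> T2 < l*e" | "B > 0" "l*e \<le> T2"
      using as(3) by (cases "T1 < l*e"; cases "B = 0"; cases "T2 < l*e") auto
    then show ?thesis
    proof cases
      case 1
      then obtain u' v' where "sys D A B S psi mu (l*e) E2 u' v'" "psi*u' > -mu" "psi*v' > -mu"
        using c(1) by blast
      then have "psi*u > -mu" "psi*v > -mu" using sys_unique[OF as(1-5) s] by auto
      moreover have "\<not> ereal e \<le> t2"
      proof -
        have "ereal (T1/l) < ereal e" using 1 e1 by simp
        then have "t2 < ereal e" using t21 by (meson less_trans)
        then show ?thesis by simp
      qed
      ultimately show ?thesis using 1 e1 by auto
    next
      case 2
      then obtain u' v' where "sys D A B S psi mu (l*e) E2 u' v'" "psi*u' \<le> -mu" "psi*v' > -mu"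
        using c(2) by blast
      then have "psi*u \<le> -mu" "psi*v > -mu" using sys_unique[OF as(1-5) s] by auto
      then show ?thesis using 2 e1 e2 e3 by auto
    next
      case 3
      then obtain u' v' where "sys D A B S psi mu (l*e) E2 u' v'" "psi*u' \<le> -mu" "psi*v' \<le> -mu"
        using c(3) by blast
      then have "psi*u \<le> -mu" "psi*v \<le> -mu" using sys_unique[OF as(1-5) s] by auto
      moreover have "T2 < T1" using c(4) 3 by simp
      ultimately show ?thesis using 3 e1 e2 e3 by auto
    qed
  qed
  show ?thesis using t2ne t21 key by blast
qed


lemma unique_of_sys:
  assumes lam: "lam > 0" and sg: "sigma > 0" and psi: "psi > 0" and mu: "mu > 0"
    and D: "Dco beta sigma lam M Mf N > 0"
    and A: "-(1-p)*gco beta sigma lam M Mf N p q \<ge> 0"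
    and B: "-(1-q)*gco beta sigma lam M Mf N p q \<ge> 0" and e2: "e2 \<ge> 0"
  shows "unique_bre beta sigma lam mu psi M Mf N p q e1 e2"
proof -
  have S: "lam*sigma > 0" using lam sg by simp
  have E2: "lam*e2 \<ge> 0" using lam e2 by simp
  obtain u v where s: "sys (Dco beta sigma lam M Mf N) (-(1-p)*gco beta sigma lam M Mf N p q)
        (-(1-q)*gco beta sigma lam M Mf N p q) (lam*sigma) psi mu (lam*e1) (lam*e2) u v"
    using sys_exists[OF D A B S psi mu E2] by blast
  define Y where "Y = ((u - Mf*beta*(p*u+(1-p)*v))/lam, u, (v - Mf*beta*((1-q)*u+q*v))/lam, v)"
  have bY: "bre beta sigma lam mu psi M Mf N p q e1 e2 (fst Y) (fst (snd Y)) (fst (snd (snd Y))) (snd (snd (snd Y)))"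
    unfolding Y_def using bre_reduce[OF lam] s lam by simp
  show ?thesis unfolding unique_bre_def
  proof (rule ex1I[where a=Y])
    show "bre beta sigma lam mu psi M Mf N p q e1 e2 (fst Y) (fst (snd Y)) (fst (snd (snd Y))) (snd (snd (snd Y)))"
      by (rule bY)
  next
    fix Z :: "real \<times> real \<times> real \<times> real"
    assume bZ: "bre beta sigma lam mu psi M Mf N p q e1 e2 (fst Z) (fst (snd Z)) (fst (snd (snd Z))) (snd (snd (snd Z)))"
    obtain z1 z2 z3 z4 where Z: "Z = (z1, z2, z3, z4)" by (cases Z) auto
    from bZ have r1: "lam*z1 = z2 - Mf*beta*(p*z2+(1-p)*z4)" and r2: "lam*z3 = z4 - Mf*beta*((1-q)*z2+q*z4)"
      and r3: "sys (Dco beta sigma lam M Mf N) (-(1-p)*gco beta sigma lam M Mf N p q)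
        (-(1-q)*gco beta sigma lam M Mf N p q) (lam*sigma) psi mu (lam*e1) (lam*e2) z2 z4"
      unfolding Z bre_reduce[OF lam] by auto
    have zu: "z2 = u" and zv: "z4 = v" using sys_unique[OF D A B S psi r3 s] by auto
    have "z1 = (u - Mf*beta*(p*u+(1-p)*v))/lam" using r1 lam zu zv by (simp add: eq_divide_eq mult.commute)
    moreover have "z3 = (v - Mf*beta*((1-q)*u+q*v))/lam" using r2 lam zu zv by (simp add: eq_divide_eq mult.commute)
    ultimately show "Z = Y" unfolding Z Y_def using zu zv by simp
  qed
qed

lemma bre_pq1:
  assumes lam: "lam > 0" and mu: "mu > 0"
    and h: "Dco beta sigma lam M Mf N * u + lam*sigma*max (psi*u) (-mu) = lam*e1"
  shows "bre beta sigma lam mu psi M Mf N 1 1 e1 0 ((u - Mf*beta*u)/lam) u 0 0"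
  unfolding bre_reduce[OF lam] sys_def using lam mu h by simp

lemma not_unique_two:
  assumes "bre beta sigma lam mu psi M Mf N p q e1 e2 a1 b1 c1 d1"
    and "bre beta sigma lam mu psi M Mf N p q e1 e2 a2 b2 c2 d2" and "b1 \<noteq> b2"
  shows "\<not> unique_bre beta sigma lam mu psi M Mf N p q e1 e2"
proof
  assume "unique_bre beta sigma lam mu psi M Mf N p q e1 e2"
  then obtain Y where "\<forall>Z. bre beta sigma lam mu psi M Mf N p q e1 e2 (fst Z) (fst (snd Z)) (fst (snd (snd Z))) (snd (snd (snd Z))) \<longrightarrow> Z = Y"
    unfolding unique_bre_def by blast
  then have "(a1,b1,c1,d1) = Y" "(a2,b2,c2,d2) = Y" using assms(1,2) by auto
  then show False using assms(3) by auto
qed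

theorem proposition5:
  fixes beta sigma lam mu psi M Mf N :: real
  assumes "0 < beta" "beta < 1" "0 < sigma" "0 < lam" "0 < mu" "1 < psi"
    and "0 < M" "M \<le> 1" "0 < Mf" "Mf \<le> 1" "0 < N" "N \<le> 1"
  defines "delta \<equiv> (M - 1) * (1 - Mf * beta) + lam * sigma * N"
  shows "(delta < 0 \<longleftrightarrow>
           (\<forall>p q e1 e2 :: real. 0 < p \<and> p \<le> 1 \<and> 0 < q \<and> q \<le> 1 \<and> 0 \<le> e2 \<longrightarrow>
              unique_bre beta sigma lam mu psi M Mf N p q e1 e2))
       \<and> (delta < 0 \<longrightarrow>
           (\<forall>p q e2 :: real. 0 < p \<and> p \<le> 1 \<and> 0 < q \<and> q \<le> 1 \<and> 0 \<le> e2 \<longrightarrow>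
              (\<exists>(ePP :: real) (eZP :: ereal). eZP \<noteq> \<infinity> \<and> eZP < ereal ePP \<and>
                 (\<forall>e1 x1 pi1 x2 pi2.
                    bre beta sigma lam mu psi M Mf N p q e1 e2 x1 pi1 x2 pi2 \<longrightarrow>
                      (type_PP psi mu pi1 pi2 \<longleftrightarrow> ePP < e1)
                    \<and> (type_ZP psi mu pi1 pi2 \<longleftrightarrow> e1 \<le> ePP \<and> eZP < ereal e1)
                    \<and> (type_ZZ psi mu pi1 pi2 \<longleftrightarrow> ereal e1 \<le> eZP)))))"
proof -
  have beta0: "0 < beta" and beta1: "beta < 1" and sg: "0 < sigma" and lam: "0 < lam"
    and mu: "0 < mu" and psi1: "1 < psi" and M0: "0 < M" and M1: "M \<le> 1" and Mf0: "0 < Mf"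
    and Mf1: "Mf \<le> 1" and N0: "0 < N" and N1: "N \<le> 1" using assms by auto
  have psi: "psi > 0" using psi1 by simp
  have a0: "Mf*beta > 0" using Mf0 beta0 by simp
  have "Mf*beta \<le> 1*beta" using Mf1 beta0 by (intro mult_right_mono) auto
  then have a1: "Mf*beta < 1" using beta1 by simp
  have S: "lam*sigma > 0" using lam sg by simp
  have Ddelta: "Dco beta sigma lam M Mf N = - delta" unfolding Dco_def delta_def by (simp add: algebra_simps)
  have gneg: "gco beta sigma lam M Mf N p q < 0" if "p \<le> 1" "q \<le> 1" for p q
  proof -
    have Ma: "M*(Mf*beta) \<ge> 0" using M0 a0 by simp
    have "M*(Mf*beta)*(p+q) \<le> M*(Mf*beta)*2" using that Ma by (intro mult_left_mono) auto
    moreover have "M*(1 - Mf*beta) + (Mf*beta)*(1-M) \<ge> 0" using M0 M1 a0 a1 by simp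
    moreover have "lam*sigma*N > 0" using S N0 by simp
    ultimately show ?thesis unfolding gco_def by (simp add: algebra_simps)
  qed
  have Anon: "-(1-p)*gco beta sigma lam M Mf N p q \<ge> 0" if "p \<le> 1" "q \<le> 1" for p q
  proof -
    have "-(1-p)*gco beta sigma lam M Mf N p q = (1-p)*(- gco beta sigma lam M Mf N p q)" by (simp add: algebra_simps)
    also have "\<dots> \<ge> 0" using gneg[OF that] that by (intro mult_nonneg_nonneg) auto
    finally show ?thesis .
  qed
  have Bnon: "-(1-q)*gco beta sigma lam M Mf N p q \<ge> 0" if "p \<le> 1" "q \<le> 1" for p q
  proof -
    have "-(1-q)*gco beta sigma lam M Mf N p q = (1-q)*(- gco beta sigma lam M Mf N p q)" by (simp add: algebra_simps)
    also have "\<dots> \<ge> 0" using gneg[OF that] that by (intro mult_nonneg_nonneg) auto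
    finally show ?thesis .
  qed
  have P1: "(\<forall>p q e1 e2 :: real. 0 < p \<and> p \<le> 1 \<and> 0 < q \<and> q \<le> 1 \<and> 0 \<le> e2 \<longrightarrow>
              unique_bre beta sigma lam mu psi M Mf N p q e1 e2)" if dl: "delta < 0"
  proof (intro allI impI)
    fix p q e1 e2 :: real
    assume h: "0 < p \<and> p \<le> 1 \<and> 0 < q \<and> q \<le> 1 \<and> 0 \<le> e2"
    have D: "Dco beta sigma lam M Mf N > 0" using Ddelta dl by simp
    show "unique_bre beta sigma lam mu psi M Mf N p q e1 e2"
      using unique_of_sys[OF lam sg psi mu D Anon Bnon] h by auto
  qed
  have P2: "delta < 0" if all: "\<forall>p q e1 e2 :: real. 0 < p \<and> p \<le> 1 \<and> 0 < q \<and> q \<le> 1 \<and> 0 \<le> e2 \<longrightarrow>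
              unique_bre beta sigma lam mu psi M Mf N p q e1 e2"
  proof (rule ccontr)
    assume "\<not> delta < 0"
    then have dg: "delta \<ge> 0" by simp
    show False
    proof (cases "delta = 0")
      case True
      then have D0: "Dco beta sigma lam M Mf N = 0" using Ddelta by simp
      have h1: "bre beta sigma lam mu psi M Mf N 1 1 (-sigma*mu) 0 (((-mu/psi) - Mf*beta*(-mu/psi))/lam) (-mu/psi) 0 0"
        using psi by (intro bre_pq1[OF lam mu]) (simp add: D0)
      have "psi * (-2*mu/psi) = -2*mu" using psi by simp
      then have "max (psi * (-2*mu/psi)) (-mu) = -mu" using mu by simp
      then have h2: "bre beta sigma lam mu psi M Mf N 1 1 (-sigma*mu) 0 (((-2*mu/psi) - Mf*beta*(-2*mu/psi))/lam) (-2*mu/psi) 0 0"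
        by (intro bre_pq1[OF lam mu]) (simp add: D0)
      have ne: "-mu/psi \<noteq> -2*mu/psi" using mu psi by (simp add: divide_eq_eq)
      show False using not_unique_two[OF h1 h2 ne] all by auto
    next
      case False
      then have dp: "delta > 0" using dg by simp
      define u where "u = - (lam*sigma*mu)/delta"
      have "delta \<le> lam*sigma*N"
      proof -
        have "(M - 1) * (1 - Mf * beta) \<le> 0" using M1 a1 by (simp add: mult_nonpos_nonneg)
        then show ?thesis unfolding delta_def by simp
      qed
      also have "lam*sigma*N \<le> lam*sigma" using S N1 by (simp add: mult_left_le)
      also have "lam*sigma < psi*(lam*sigma)" using S psi1 mult_strict_right_mono[of 1 psi "lam*sigma"] by simp
      finally have dl: "delta < psi*(lam*sigma)" .
      have "psi*u = - (psi*(lam*sigma)*mu)/delta" unfolding u_def by simp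
      moreover have "psi*(lam*sigma)*mu \<ge> delta*mu" using dl mu by simp
      then have "(psi*(lam*sigma)*mu)/delta \<ge> mu" using dp by (simp add: le_divide_eq mult.commute)
      ultimately have "psi*u \<le> -mu" by simp
      then have mx: "max (psi*u) (-mu) = -mu" by simp
      have "Dco beta sigma lam M Mf N * u = lam*sigma*mu" unfolding Ddelta u_def using dp by simp
      then have h1: "bre beta sigma lam mu psi M Mf N 1 1 0 0 ((u - Mf*beta*u)/lam) u 0 0"
        by (intro bre_pq1[OF lam mu]) (simp add: mx)
      have h2: "bre beta sigma lam mu psi M Mf N 1 1 0 0 ((0 - Mf*beta*0)/lam) 0 0 0"
        by (intro bre_pq1[OF lam mu]) (simp add: mu)
      have ne: "u \<noteq> 0" unfolding u_def using dp lam sg mu by simp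
      show False using not_unique_two[OF h1 h2 ne] all by auto
    qed
  qed
  have P3: "\<forall>p q e2 :: real. 0 < p \<and> p \<le> 1 \<and> 0 < q \<and> q \<le> 1 \<and> 0 \<le> e2 \<longrightarrow>
              (\<exists>(ePP :: real) (eZP :: ereal). eZP \<noteq> \<infinity> \<and> eZP < ereal ePP \<and>
                 (\<forall>e1 x1 pi1 x2 pi2.
                    bre beta sigma lam mu psi M Mf N p q e1 e2 x1 pi1 x2 pi2 \<longrightarrow>
                      (type_PP psi mu pi1 pi2 \<longleftrightarrow> ePP < e1)
                    \<and> (type_ZP psi mu pi1 pi2 \<longleftrightarrow> e1 \<le> ePP \<and> eZP < ereal e1)
                    \<and> (type_ZZ psi mu pi1 pi2 \<longleftrightarrow> ereal e1 \<le> eZP)))" if dl: "delta < 0"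
  proof (intro allI impI)
    fix p q e2 :: real
    assume h: "0 < p \<and> p \<le> 1 \<and> 0 < q \<and> q \<le> 1 \<and> 0 \<le> e2"
    have D: "Dco beta sigma lam M Mf N > 0" using Ddelta dl by simp
    have E2: "lam*e2 \<ge> 0" using lam h by simp
    obtain t1 t2 where t: "t2 \<noteq> \<infinity>" "t2 < ereal t1" and
      k: "\<And>e u v. sys (Dco beta sigma lam M Mf N) (-(1-p)*gco beta sigma lam M Mf N p q)
        (-(1-q)*gco beta sigma lam M Mf N p q) (lam*sigma) psi mu (lam*e) (lam*e2) u v \<Longrightarrow>
        ((psi*u > -mu \<and> psi*v > -mu) \<longleftrightarrow> t1 < e)
      \<and> ((psi*u \<le> -mu \<and> psi*v > -mu) \<longleftrightarrow> e \<le> t1 \<and> t2 < ereal e)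
      \<and> ((psi*u \<le> -mu \<and> psi*v \<le> -mu) \<longleftrightarrow> ereal e \<le> t2)"
      using sys_thresh[OF D Anon Bnon S psi mu E2 lam] h by blast
    show "\<exists>(ePP :: real) (eZP :: ereal). eZP \<noteq> \<infinity> \<and> eZP < ereal ePP \<and>
                 (\<forall>e1 x1 pi1 x2 pi2.
                    bre beta sigma lam mu psi M Mf N p q e1 e2 x1 pi1 x2 pi2 \<longrightarrow>
                      (type_PP psi mu pi1 pi2 \<longleftrightarrow> ePP < e1)
                    \<and> (type_ZP psi mu pi1 pi2 \<longleftrightarrow> e1 \<le> ePP \<and> eZP < ereal e1)
                    \<and> (type_ZZ psi mu pi1 pi2 \<longleftrightarrow> ereal e1 \<le> eZP))"
    proof (intro exI conjI allI impI)
      show "t2 \<noteq> \<infinity>" "t2 < ereal t1" using t by auto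
      fix e1 x1 pi1 x2 pi2
      assume b: "bre beta sigma lam mu psi M Mf N p q e1 e2 x1 pi1 x2 pi2"
      then have s: "sys (Dco beta sigma lam M Mf N) (-(1-p)*gco beta sigma lam M Mf N p q)
        (-(1-q)*gco beta sigma lam M Mf N p q) (lam*sigma) psi mu (lam*e1) (lam*e2) pi1 pi2"
        using bre_reduce[OF lam] by blast
      note kk = k[OF s]
      show "type_PP psi mu pi1 pi2 \<longleftrightarrow> t1 < e1" using kk
        unfolding type_PP_def zlb_binds_def by (simp add: not_le)
      show "type_ZP psi mu pi1 pi2 \<longleftrightarrow> e1 \<le> t1 \<and> t2 < ereal e1" using kk
        unfolding type_ZP_def zlb_binds_def by (simp add: not_le)
      show "type_ZZ psi mu pi1 pi2 \<longleftrightarrow> ereal e1 \<le> t2" using kk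
        unfolding type_ZZ_def zlb_binds_def by (simp add: not_le)
    qed
  qed
  show ?thesis using P1 P2 P3 by blast
qed

end
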